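(* Let $H \in \mathcal{M}_n(\mathbb{R})$ be a real symmetric matrix whose largest eigenvalue (spectral radius) is simple. Then $H$ has exactly $k$ distinct eigenvalues, where $2 \le k \le n$, if and only if there are $k$ distinct real numbers $\lambda_1, \lambda_2, \ldots, \lambda_k$ such that (i) $H - \lambda_i I$ is a singular matrix for every $2 \le i \le k$; and (ii) $\prod_{i=2}^{k}(H - \lambda_i I) = b\,\mathbf{y}\mathbf{y}^T$, where $b$ is a positive real number, $\mathbf{y} \in \mathbb{R}^n\setminus\{\mathbf{0}\}$ and $H\mathbf{y} = \lambda_1\mathbf{y}$. Moreover, in this case $\lambda_1, \ldots, \lambda_k$ are exactly the $k$ distinct eigenvalues of $H$.
   Context: $\mathcal{M}_n(\mathbb{R})$ is the set of $n\times n$ real matrices and $I$ the identity matrix. The spectral radius here means the largest eigenvalue; it is simple if its algebraic multiplicity is $1$. *)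

theory Defs
  imports "Jordan_Normal_Form.Char_Poly" "Jordan_Normal_Form.Determinant"
begin

definition largest_eigenvalue :: "real mat \<Rightarrow> real" where
  "largest_eigenvalue H = Max {x. eigenvalue H x}"

definition mat_prod_list :: "nat \<Rightarrow> real mat list \<Rightarrow> real mat" where
  "mat_prod_list n As = foldr (\<lambda>A B. A * B) As (1\<^sub>m n)"

definition outer_mat :: "real vec \<Rightarrow> real mat" where
  "outer_mat y = mat (dim_vec y) (dim_vec y) (\<lambda>(i,j). y $ i * y $ j)"

end

theory Submission imports Defs "Jordan_Normal_Form.Schur_Decomposition" begin

hide_const (open) Coset.order


definition mprod :: "real mat \<Rightarrow> nat \<Rightarrow> real list \<Rightarrow> real mat" where
  "mprod H n ms = foldr (\<lambda>\<mu> X. (H - \<mu> \<cdot>\<^sub>m 1\<^sub>m n) * X) ms (1\<^sub>m n)"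

lemma mprod_simps[simp]: "mprod H n [] = 1\<^sub>m n"
  "mprod H n (m # ms) = (H - m \<cdot>\<^sub>m 1\<^sub>m n) * mprod H n ms"
  by (auto simp: mprod_def)

lemma mprod_carrier[simp]: "H \<in> carrier_mat n n \<Longrightarrow> mprod H n ms \<in> carrier_mat n n"
  by (induct ms) auto

lemma mprod_eigvec: assumes H: "H \<in> carrier_mat n n" and v: "v \<in> carrier_vec n"
  and ev: "H *\<^sub>v v = \<mu> \<cdot>\<^sub>v v"
  shows "mprod H n ms *\<^sub>v v = (\<Prod>m\<leftarrow>ms. \<mu> - m) \<cdot>\<^sub>v v"
proof (induct ms)
  case Nil then show ?case using v by simp
next
  case (Cons m ms)
  have "mprod H n (m # ms) *\<^sub>v v = (H - m \<cdot>\<^sub>m 1\<^sub>m n) *\<^sub>v (mprod H n ms *\<^sub>v v)"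
    using H v by (simp, intro assoc_mult_mat_vec[of _ n n _ n]) auto
  also have "\<dots> = (\<Prod>m\<leftarrow>ms. \<mu> - m) \<cdot>\<^sub>v ((H - m \<cdot>\<^sub>m 1\<^sub>m n) *\<^sub>v v)"
    unfolding Cons by (rule mult_mat_vec[of _ n n], use H v in auto)
  also have "(H - m \<cdot>\<^sub>m 1\<^sub>m n) *\<^sub>v v = (\<mu> - m) \<cdot>\<^sub>v v"
  proof (rule eq_vecI)
    fix i assume "i < dim_vec ((\<mu> - m) \<cdot>\<^sub>v v)"
    hence i: "i < n" using v by auto
    have "((H - m \<cdot>\<^sub>m 1\<^sub>m n) *\<^sub>v v) $ i = (H *\<^sub>v v) $ i - (m \<cdot>\<^sub>v v) $ i"
      using H v i by (subst minus_mult_distrib_mat_vec[of _ n n], auto)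
    also have "\<dots> = ((\<mu> - m) \<cdot>\<^sub>v v) $ i" using ev i v by (simp add: algebra_simps)
    finally show "((H - m \<cdot>\<^sub>m 1\<^sub>m n) *\<^sub>v v) $ i = ((\<mu> - m) \<cdot>\<^sub>v v) $ i" .
  qed (use H v in auto)
  finally show ?case using v by (simp add: smult_smult_assoc mult.commute)
qed

lemma smult_one_left: "X \<in> carrier_mat n n \<Longrightarrow> (a::real) \<cdot>\<^sub>m 1\<^sub>m n * X = a \<cdot>\<^sub>m X"
  by (simp add: mult_smult_assoc_mat[of _ n n])
lemma smult_one_right: "X \<in> carrier_mat n n \<Longrightarrow> X * ((a::real) \<cdot>\<^sub>m 1\<^sub>m n) = a \<cdot>\<^sub>m X"
  by (subst mult_smult_distrib[of _ n n], auto)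

lemma HC_carrier[simp]: "H \<in> carrier_mat n n \<Longrightarrow> H - (a::real) \<cdot>\<^sub>m 1\<^sub>m n \<in> carrier_mat n n"
  by auto

lemma comm_shift: assumes H: "H \<in> carrier_mat n n" and X: "X \<in> carrier_mat n n"
  and c: "H * X = X * H"
  shows "(H - (a::real) \<cdot>\<^sub>m 1\<^sub>m n) * X = X * (H - a \<cdot>\<^sub>m 1\<^sub>m n)"
proof -
  have "(H - a \<cdot>\<^sub>m 1\<^sub>m n) * X = H * X - a \<cdot>\<^sub>m X"
    using H X by (simp add: minus_mult_distrib_mat[of _ n n] smult_one_left)
  moreover have "X * (H - a \<cdot>\<^sub>m 1\<^sub>m n) = X * H - a \<cdot>\<^sub>m X"
    using H X by (simp add: mult_minus_distrib_mat[of _ n n] smult_one_right)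
  ultimately show ?thesis using c by simp
qed

lemma mprod_comm_H: assumes H: "H \<in> carrier_mat n n"
  shows "H * mprod H n ms = mprod H n ms * H"
proof (induct ms)
  case Nil then show ?case using H by simp
next
  case (Cons m ms)
  let ?Y = "mprod H n ms"
  have Y: "?Y \<in> carrier_mat n n" using H by simp
  have HC: "H - m \<cdot>\<^sub>m 1\<^sub>m n \<in> carrier_mat n n" using H by simp
  have "H * mprod H n (m # ms) = (H * (H - m \<cdot>\<^sub>m 1\<^sub>m n)) * ?Y"
    using H Y HC by (simp add: assoc_mult_mat[of _ n n _ n _ n])
  also have "H * (H - m \<cdot>\<^sub>m 1\<^sub>m n) = (H - m \<cdot>\<^sub>m 1\<^sub>m n) * H"
    using comm_shift[OF H H refl] by simp
  also have "(H - m \<cdot>\<^sub>m 1\<^sub>m n) * H * ?Y = (H - m \<cdot>\<^sub>m 1\<^sub>m n) * (H * ?Y)"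
    using H Y HC by (simp add: assoc_mult_mat[of _ n n _ n _ n])
  also have "\<dots> = (H - m \<cdot>\<^sub>m 1\<^sub>m n) * (?Y * H)" using Cons by simp
  also have "\<dots> = mprod H n (m # ms) * H"
    using H Y HC by (simp add: assoc_mult_mat[of _ n n _ n _ n])
  finally show ?case .
qed

lemma mprod_comm: assumes H: "H \<in> carrier_mat n n"
  shows "(H - (a::real) \<cdot>\<^sub>m 1\<^sub>m n) * mprod H n ms = mprod H n ms * (H - a \<cdot>\<^sub>m 1\<^sub>m n)"
  by (rule comm_shift[OF H mprod_carrier[OF H] mprod_comm_H[OF H]])

lemma mprod_sym: assumes H: "H \<in> carrier_mat n n" and sym: "transpose_mat H = H"
  shows "transpose_mat (mprod H n ms) = mprod H n ms"
proof (induct ms)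
  case Nil then show ?case by simp
next
  case (Cons m ms)
  have symH: "H $$ (j,i) = H $$ (i,j)" if "i < n" "j < n" for i j
    using arg_cong[OF sym, of "\<lambda>M. M $$ (i,j)"] that H by auto
  have T: "transpose_mat (H - m \<cdot>\<^sub>m 1\<^sub>m n) = H - m \<cdot>\<^sub>m 1\<^sub>m n"
    by (rule eq_matI) (use H symH in auto)
  have "transpose_mat (mprod H n (m # ms)) = mprod H n ms * (H - m \<cdot>\<^sub>m 1\<^sub>m n)"
    using H transpose_mult[of "H - m \<cdot>\<^sub>m 1\<^sub>m n" n n "mprod H n ms" n] by (simp add: T Cons)
  also have "\<dots> = mprod H n (m # ms)" using mprod_comm[OF H, of m ms] by simp
  finally show ?case .
qed

lemma mprod_similar: assumes H: "H \<in> carrier_mat n n" and B: "B \<in> carrier_mat n n"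
  and P: "P \<in> carrier_mat n n" and Q: "Q \<in> carrier_mat n n"
  and PQ: "P * Q = 1\<^sub>m n" and QP: "Q * P = 1\<^sub>m n" and HB: "H = P * B * Q"
  shows "mprod H n ms = P * mprod B n ms * Q"
proof (induct ms)
  case Nil then show ?case using P Q PQ by simp
next
  case (Cons m ms)
  let ?Y = "mprod B n ms"
  have Y: "?Y \<in> carrier_mat n n" using B by simp
  have BC: "B - m \<cdot>\<^sub>m 1\<^sub>m n \<in> carrier_mat n n" using B by simp
  have 1: "H - m \<cdot>\<^sub>m 1\<^sub>m n = P * (B - m \<cdot>\<^sub>m 1\<^sub>m n) * Q"
  proof -
    have "P * (B - m \<cdot>\<^sub>m 1\<^sub>m n) = P * B - m \<cdot>\<^sub>m P"
      using P B by (simp add: mult_minus_distrib_mat[of _ n n] smult_one_right)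
    hence "P * (B - m \<cdot>\<^sub>m 1\<^sub>m n) * Q = P * B * Q - (m \<cdot>\<^sub>m P) * Q"
      using P B Q by (simp add: minus_mult_distrib_mat[of _ n n])
    also have "(m \<cdot>\<^sub>m P) * Q = m \<cdot>\<^sub>m 1\<^sub>m n" using P Q PQ by (simp add: mult_smult_assoc_mat[of _ n n])
    finally show ?thesis using HB by simp
  qed
  have "mprod H n (m # ms) = P * (B - m \<cdot>\<^sub>m 1\<^sub>m n) * Q * (P * ?Y * Q)"
    using 1 Cons by simp
  also have "\<dots> = P * (B - m \<cdot>\<^sub>m 1\<^sub>m n) * (Q * P) * ?Y * Q"
    using P Q Y BC by (simp add: assoc_mult_mat[of _ n n _ n _ n])
  also have "\<dots> = P * mprod B n (m # ms) * Q"
    using P Q Y BC QP by (simp add: assoc_mult_mat[of _ n n _ n _ n])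
  finally show ?case .
qed

lemma mult_entry: assumes "A \<in> carrier_mat n n" "C \<in> carrier_mat n n" "i < n" "j < n"
  shows "(A * C) $$ (i,j) = (\<Sum>l\<in>{0..<n}. A $$ (i,l) * C $$ (l,j))"
  using assms by (simp add: scalar_prod_def)

lemma mult_upper: assumes A: "A \<in> carrier_mat n n" and C: "C \<in> carrier_mat n n"
  and uA: "upper_triangular A" and uC: "upper_triangular C"
  shows "upper_triangular (A * C)" "\<And>i. i < n \<Longrightarrow> (A * C) $$ (i,i) = A $$ (i,i) * C $$ (i,i)"
proof -
  have zA: "A $$ (i,l) = 0" if "l < i" "i < n" for i l using uA that A by auto
  have zC: "C $$ (l,j) = 0" if "j < l" "l < n" for j l using uC that C by auto
  show "upper_triangular (A * C)"
  proof (rule upper_triangularI)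
    fix i j assume ji: "j < i" and i: "i < dim_row (A * C)"
    hence i: "i < n" using A by simp
    have "(A * C) $$ (i,j) = (\<Sum>l\<in>{0..<n}. A $$ (i,l) * C $$ (l,j))"
      using mult_entry[OF A C i] ji i by simp
    also have "\<dots> = 0"
    proof (rule sum.neutral, intro ballI)
      fix l assume l: "l \<in> {0..<n}"
      show "A $$ (i,l) * C $$ (l,j) = 0"
        using zA[of l i] zC[of j l] l ji i by (cases "l < i") auto
    qed
    finally show "(A * C) $$ (i,j) = 0" .
  qed
  fix i assume i: "i < n"
  have "(A * C) $$ (i,i) = (\<Sum>l\<in>{0..<n}. A $$ (i,l) * C $$ (l,i))"
    using mult_entry[OF A C i i] by simp
  also have "\<dots> = A $$ (i,i) * C $$ (i,i)"
  proof -
    have "(\<Sum>l\<in>{0..<n}. A $$ (i,l) * C $$ (l,i)) = A $$ (i,i) * C $$ (i,i) + (\<Sum>l\<in>{0..<n} - {i}. A $$ (i,l) * C $$ (l,i))"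
      using i by (subst sum.remove[of _ i]) auto
    also have "(\<Sum>l\<in>{0..<n} - {i}. A $$ (i,l) * C $$ (l,i)) = 0"
    proof (rule sum.neutral, intro ballI)
      fix l assume l: "l \<in> {0..<n} - {i}"
      show "A $$ (i,l) * C $$ (l,i) = 0"
        using zA[of l i] zC[of i l] l i by (cases "l < i") auto
    qed
    finally show ?thesis by simp
  qed
  finally show "(A * C) $$ (i,i) = A $$ (i,i) * C $$ (i,i)" .
qed

lemma mprod_upper: assumes B: "B \<in> carrier_mat n n" and uB: "upper_triangular B"
  shows "upper_triangular (mprod B n ms) \<and> (\<forall>i<n. mprod B n ms $$ (i,i) = (\<Prod>m\<leftarrow>ms. B $$ (i,i) - m))"
proof (induct ms)
  case Nil
  show ?case by (auto intro!: upper_triangularI)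
next
  case (Cons m ms)
  have C: "B - m \<cdot>\<^sub>m 1\<^sub>m n \<in> carrier_mat n n" using B by simp
  have uC: "upper_triangular (B - m \<cdot>\<^sub>m 1\<^sub>m n)"
    using uB B by (intro upper_triangularI) auto
  have Y: "mprod B n ms \<in> carrier_mat n n" using B by simp
  note mu = mult_upper[OF C Y uC Cons[THEN conjunct1]]
  show ?case
  proof
    show "upper_triangular (mprod B n (m # ms))" using mu(1) by simp
    show "\<forall>i<n. mprod B n (m # ms) $$ (i, i) = (\<Prod>m\<leftarrow>m # ms. B $$ (i, i) - m)"
      using mu(2) Cons[THEN conjunct2] B by auto
  qed
qed

lemma strict_upper_nilpotent: assumes N: "N \<in> carrier_mat n n"
  and z: "\<And>i j. j \<le> i \<Longrightarrow> i < n \<Longrightarrow> j < n \<Longrightarrow> N $$ (i,j) = 0"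
  shows "i < n \<Longrightarrow> j < n \<Longrightarrow> j < i + k \<Longrightarrow> (N ^\<^sub>m k) $$ (i,j) = 0"
proof (induct k arbitrary: i j)
  case 0 then show ?case using N by simp
next
  case (Suc k)
  have Nk: "N ^\<^sub>m k \<in> carrier_mat n n" using N by simp
  have "(N ^\<^sub>m Suc k) $$ (i,j) = (\<Sum>l\<in>{0..<n}. (N ^\<^sub>m k) $$ (i,l) * N $$ (l,j))"
    using mult_entry[OF Nk N Suc(2,3)] by simp
  also have "\<dots> = 0"
  proof (rule sum.neutral, intro ballI)
    fix l assume l: "l \<in> {0..<n}"
    show "(N ^\<^sub>m k) $$ (i,l) * N $$ (l,j) = 0"
      using Suc(1)[of i l] z[of j l] l Suc(2-4) by (cases "l < i + k") auto
  qed
  finally show ?case .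
qed

lemma strict_upper_nilpotent': assumes N: "N \<in> carrier_mat n n"
  and z: "\<And>i j. j \<le> i \<Longrightarrow> i < n \<Longrightarrow> j < n \<Longrightarrow> N $$ (i,j) = 0"
  shows "N ^\<^sub>m n = 0\<^sub>m n n"
  by (rule eq_matI, insert strict_upper_nilpotent[OF N z] N, auto)

lemma pow_comm: assumes S: "S \<in> carrier_mat n n"
  shows "S ^\<^sub>m k * S = S * S ^\<^sub>m k"
proof (induct k)
  case 0 then show ?case using S by simp
next
  case (Suc k)
  have Sk: "S ^\<^sub>m k \<in> carrier_mat n n" using S by simp
  have "S ^\<^sub>m Suc k * S = (S ^\<^sub>m k * S) * S" by simp
  also have "\<dots> = (S * S ^\<^sub>m k) * S" using Suc by simp
  also have "\<dots> = S * (S ^\<^sub>m k * S)" using S Sk by (simp add: assoc_mult_mat[of _ n n _ n _ n])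
  finally show ?case by simp
qed

lemma sym_sq_zero: assumes S: "S \<in> carrier_mat n n" and sym: "transpose_mat S = S"
  and X: "X \<in> carrier_mat n n" and z: "S * (S * X) = 0\<^sub>m n n"
  shows "S * X = (0\<^sub>m n n :: real mat)"
proof -
  define Y where "Y = S * X"
  have Y: "Y \<in> carrier_mat n n" using S X Y_def by simp
  have "transpose_mat Y * Y = transpose_mat X * transpose_mat S * (S * X)"
    unfolding Y_def using S X by (simp add: transpose_mult[of _ n n _ n])
  also have "\<dots> = transpose_mat X * (S * (S * X))"
    using S X sym by (simp add: assoc_mult_mat[of _ n n _ n _ n])
  also have "\<dots> = 0\<^sub>m n n" using z X by simp
  finally have YY: "transpose_mat Y * Y = 0\<^sub>m n n" .
  show ?thesis unfolding Y_def[symmetric]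
  proof (rule eq_matI)
    fix i j assume "i < dim_row (0\<^sub>m n n :: real mat)" "j < dim_col (0\<^sub>m n n :: real mat)"
    hence i: "i < n" and j: "j < n" by auto
    have "(transpose_mat Y * Y) $$ (j,j) = (\<Sum>l\<in>{0..<n}. Y $$ (l,j) * Y $$ (l,j))"
      using Y j by (simp add: scalar_prod_def)
    hence s0: "(\<Sum>l\<in>{0..<n}. Y $$ (l,j) * Y $$ (l,j)) = 0" using YY j by simp
    have "\<forall>l\<in>{0..<n}. Y $$ (l,j) * Y $$ (l,j) = 0"
      using sum_nonneg_eq_0_iff[of "{0..<n}" "\<lambda>l. Y $$ (l,j) * Y $$ (l,j)"] s0 by simp
    thus "Y $$ (i,j) = 0\<^sub>m n n $$ (i,j)" using i j by simp
  qed (use Y in auto)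
qed

lemma sym_nilpotent: assumes S: "S \<in> carrier_mat n n" and sym: "transpose_mat S = S"
  and z: "S ^\<^sub>m k = 0\<^sub>m n n"
  shows "S = (0\<^sub>m n n :: real mat)"
proof (cases k)
  case 0
  with z have "1\<^sub>m n = (0\<^sub>m n n :: real mat)" by (simp add: S[THEN carrier_matD(1)])
  hence "n = 0" by (metis index_one_mat(1) index_zero_mat(1) zero_neq_one neq0_conv)
  thus ?thesis using S by (intro eq_matI) auto
next
  case (Suc k')
  have step: "S ^\<^sub>m Suc (Suc j) = 0\<^sub>m n n \<Longrightarrow> S ^\<^sub>m Suc j = 0\<^sub>m n n" for j
  proof -
    assume a: "S ^\<^sub>m Suc (Suc j) = 0\<^sub>m n n"
    define M where "M = S ^\<^sub>m j"
    have M: "M \<in> carrier_mat n n" using S M_def by simp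
    have c: "M * S = S * M" unfolding M_def by (rule pow_comm[OF S])
    have "S ^\<^sub>m Suc (Suc j) = (M * S) * S" unfolding M_def by simp
    also have "\<dots> = S * (S * M)" using c S M by (simp add: assoc_mult_mat[of _ n n _ n _ n])
    finally have "S * (S * M) = 0\<^sub>m n n" using a by simp
    from sym_sq_zero[OF S sym M this] show ?thesis using c unfolding M_def by simp
  qed
  have "S ^\<^sub>m Suc j = 0\<^sub>m n n \<Longrightarrow> S ^\<^sub>m Suc 0 = 0\<^sub>m n n" for j
  proof (induct j)
    case (Suc j) then show ?case using step[of j] by blast
  qed
  with z Suc have "S ^\<^sub>m Suc 0 = 0\<^sub>m n n" by blast
  thus ?thesis using S by simp
qed

lemma herm_real: assumes H: "H \<in> carrier_mat n n" and sym: "transpose_mat H = H"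
  and v: "v \<in> carrier_vec n" "v \<noteq> 0\<^sub>v n"
  and ev: "map_mat complex_of_real H *\<^sub>v v = a \<cdot>\<^sub>v v"
  shows "Im a = 0"
proof -
  have symH: "H $$ (j,i) = H $$ (i,j)" if "i < n" "j < n" for i j
    using arg_cong[OF sym, of "\<lambda>M. M $$ (i,j)"] that H by auto
  have evi: "(\<Sum>j\<in>{0..<n}. of_real (H $$ (i,j)) * v $ j) = a * v $ i" if i: "i < n" for i
    using arg_cong[OF ev, of "\<lambda>w. w $ i"] i H v by (simp add: scalar_prod_def)
  define s where "s = (\<Sum>i\<in>{0..<n}. cnj (v $ i) * (\<Sum>j\<in>{0..<n}. of_real (H $$ (i,j)) * v $ j))"
  define T where "T = (\<Sum>i\<in>{0..<n}. (cmod (v $ i))^2)"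
  have "s = (\<Sum>i\<in>{0..<n}. cnj (v $ i) * (a * v $ i))"
    unfolding s_def by (rule sum.cong, auto simp: evi)
  also have "\<dots> = (\<Sum>i\<in>{0..<n}. a * of_real ((cmod (v $ i))^2))"
    by (rule sum.cong, simp, subst complex_norm_square, simp add: mult.commute)
  also have "\<dots> = a * of_real T" unfolding T_def by (simp add: sum_distrib_left)
  finally have sa: "s = a * of_real T" .
  have "cnj s = (\<Sum>i\<in>{0..<n}. \<Sum>j\<in>{0..<n}. v $ i * of_real (H $$ (i,j)) * cnj (v $ j))"
    unfolding s_def by (simp add: sum_distrib_left mult.commute mult.left_commute)
  also have "\<dots> = (\<Sum>j\<in>{0..<n}. \<Sum>i\<in>{0..<n}. v $ i * of_real (H $$ (i,j)) * cnj (v $ j))"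
    by (rule sum.swap)
  also have "\<dots> = s" unfolding s_def
    by (auto simp: sum_distrib_left symH mult.commute mult.left_commute intro!: sum.cong)
  finally have "cnj s = s" .
  hence "Im (cnj s) = Im s" by (rule arg_cong)
  moreover have "Im (cnj s) = - Im s" by simp
  ultimately have "- Im s = Im s" by simp
  hence ims: "Im s = 0" by linarith
  have "T > 0"
  proof -
    from v obtain i where i: "i < n" "v $ i \<noteq> 0" by (metis eq_vecI carrier_vecD index_zero_vec(1,2))
    have "(cmod (v $ i))^2 \<le> T" unfolding T_def using i
      by (intro member_le_sum) auto
    moreover have "(cmod (v $ i))^2 > 0" using i by simp
    ultimately show ?thesis by linarith
  qed
  from ims sa have "Im a * T = 0" by simp
  with \<open>T > 0\<close> show ?thesis by simp
qed

lemma real_split: fixes H :: "real mat" assumes H: "H \<in> carrier_mat n n" and sym: "transpose_mat H = H"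
  shows "\<exists>rs. char_poly H = (\<Prod>r\<leftarrow>rs. [:-r,1:])"
proof -
  let ?Hc = "map_mat complex_of_real H"
  have Hc: "?Hc \<in> carrier_mat n n" using H by simp
  obtain as where as: "char_poly ?Hc = (\<Prod>a\<leftarrow>as. [:-a,1:])"
    using char_poly_factorized[OF Hc] by blast
  have re: "of_real (Re a) = a" if a: "a \<in> set as" for a
  proof -
    have "poly (char_poly ?Hc) a = 0" unfolding as poly_prod_list
      using a by (auto simp: prod_list_zero_iff)
    hence "eigenvalue ?Hc a" using eigenvalue_root_char_poly[OF Hc] by simp
    then obtain v where "eigenvector ?Hc v a" unfolding eigenvalue_def by blast
    hence v: "v \<in> carrier_vec n" "v \<noteq> 0\<^sub>v n" "?Hc *\<^sub>v v = a \<cdot>\<^sub>v v"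
      unfolding eigenvector_def using H by auto
    have "Im a = 0" by (rule herm_real[OF H sym v])
    thus ?thesis by (simp add: complex_eq_iff)
  qed
  define rs where "rs = map Re as"
  have cp: "map_poly of_real (char_poly H) = char_poly ?Hc"
    by (rule of_real_hom.char_poly_hom[OF H, where 'a=complex, symmetric])
  interpret m: map_poly_inj_comm_ring_hom "of_real :: real \<Rightarrow> complex" ..
  have "map_poly of_real (char_poly H) = char_poly ?Hc" by (rule cp)
  also have "\<dots> = (\<Prod>r\<leftarrow>rs. [:-of_real r,1:])"
    unfolding as rs_def by (simp add: o_def re cong: map_cong)
  also have "\<dots> = map_poly of_real (\<Prod>r\<leftarrow>rs. [:-r,1:])"
    by (simp add: m.hom_prod_list o_def)
  finally show ?thesis by auto
qed

lemma F2: fixes H :: "real mat" assumes H: "H \<in> carrier_mat n n" and sym: "transpose_mat H = H"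
  and ms: "\<And>e. eigenvalue H e \<Longrightarrow> e \<in> set ms"
  shows "mprod H n ms = 0\<^sub>m n n"
proof -
  obtain rs where rs: "char_poly H = (\<Prod>r\<leftarrow>rs. [:-r,1:])" using real_split[OF H sym] by blast
  obtain B P Q where sd: "schur_decomposition H rs = (B,P,Q)" by (cases "schur_decomposition H rs") auto
  from schur_decomposition[OF H rs sd]
  have wit: "similar_mat_wit H B P Q" and uB: "upper_triangular B" and dB: "diag_mat B = rs" by auto
  note w = similar_mat_witD2[OF H wit]
  have B: "B \<in> carrier_mat n n" using w by auto
  have diag_in: "B $$ (i,i) \<in> set ms" if i: "i < n" for i
  proof -
    have "B $$ (i,i) \<in> set rs" using dB i B unfolding diag_mat_def by auto
    hence "poly (char_poly H) (B $$ (i,i)) = 0" unfolding rs poly_prod_list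
      by (auto simp: prod_list_zero_iff)
    hence "eigenvalue H (B $$ (i,i))" using eigenvalue_root_char_poly[OF H] by simp
    thus ?thesis by (rule ms)
  qed
  define N where "N = mprod B n ms"
  have N: "N \<in> carrier_mat n n" using B N_def by simp
  note up = mprod_upper[OF B uB, of ms, folded N_def]
  have z: "N $$ (i,j) = 0" if "j \<le> i" "i < n" "j < n" for i j
  proof (cases "j = i")
    case True
    have "(\<Prod>m\<leftarrow>ms. B $$ (i,i) - m) = 0" using diag_in[OF that(2)]
      by (auto simp: prod_list_zero_iff)
    thus ?thesis using up True that by auto
  next
    case False
    thus ?thesis using up that N by (auto elim!: upper_triangularD)
  qed
  have Nn: "N ^\<^sub>m n = 0\<^sub>m n n" by (rule strict_upper_nilpotent'[OF N z])
  have HN: "mprod H n ms = P * N * Q" unfolding N_def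
    by (rule mprod_similar[OF H B]) (use w in auto)
  have wit2: "similar_mat_wit (mprod H n ms) N P Q"
    by (rule similar_mat_witI[of _ _ n]) (use w HN N H in auto)
  have "(mprod H n ms) ^\<^sub>m n = P * N ^\<^sub>m n * Q" by (rule similar_mat_wit_pow_id[OF wit2])
  also have "\<dots> = 0\<^sub>m n n" unfolding Nn using w by simp
  finally have "(mprod H n ms) ^\<^sub>m n = 0\<^sub>m n n" .
  from sym_nilpotent[OF mprod_carrier[OF H] mprod_sym[OF H sym] this] show ?thesis .
qed

lemma bij_insert_index: assumes i: "i < n"
  shows "bij_betw (insert_index i) {0..<n-1} ({0..<n} - {i})"
proof (rule bij_betw_byWitness[where f' = "delete_index i"])
  show "\<forall>a\<in>{0..<n - 1}. delete_index i (insert_index i a) = a" by simp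
  show "\<forall>a'\<in>{0..<n} - {i}. insert_index i (delete_index i a') = a'"
    by (auto simp: insert_delete_index)
  show "insert_index i ` {0..<n - 1} \<subseteq> {0..<n} - {i}"
    using i by (auto simp: insert_index_def)
  show "delete_index i ` ({0..<n} - {i}) \<subseteq> {0..<n - 1}"
    using i by (auto simp: delete_index_def)
qed

lemma sum_insert_index: assumes i: "i < n"
  shows "(\<Sum>l\<in>{0..<n-1}. f (insert_index i l)) = (\<Sum>l\<in>{0..<n} - {i}. (f l :: real))"
  using sum.reindex_bij_betw[OF bij_insert_index[OF i], of f] by simp

lemma delete_eigen: assumes H: "H \<in> carrier_mat n n" and i: "i < n"
  and v: "v \<in> carrier_vec n" "v \<noteq> 0\<^sub>v n" and vi: "v $ i = 0"
  and ev: "H *\<^sub>v v = (lam::real) \<cdot>\<^sub>v v"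
  shows "poly (char_poly (mat_delete H i i)) lam = 0"
proof -
  define v' where "v' = vec (n-1) (\<lambda>j. v $ insert_index i j)"
  have HD: "mat_delete H i i \<in> carrier_mat (n-1) (n-1)" using mat_delete_carrier[OF H] .
  have v'c: "v' \<in> carrier_vec (n-1)" unfolding v'_def by simp
  have "v' \<noteq> 0\<^sub>v (n-1)"
  proof
    assume z: "v' = 0\<^sub>v (n-1)"
    from v obtain l where l: "l < n" "v $ l \<noteq> 0" by (metis eq_vecI carrier_vecD index_zero_vec(1,2))
    with vi have li: "l \<noteq> i" by auto
    have dl: "delete_index i l < n - 1" using l li i by (auto simp: delete_index_def)
    have "v' $ delete_index i l = v $ l" unfolding v'_def using dl insert_delete_index[OF li] by simp
    with z dl l show False by simp
  qed
  moreover have "mat_delete H i i *\<^sub>v v' = lam \<cdot>\<^sub>v v'"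
  proof (rule eq_vecI)
    fix j assume "j < dim_vec (lam \<cdot>\<^sub>v v')"
    hence j: "j < n - 1" unfolding v'_def by simp
    have ij: "insert_index i j < n" using i j by (auto simp: insert_index_def)
    have "(mat_delete H i i *\<^sub>v v') $ j = (\<Sum>l\<in>{0..<n-1}. H $$ (insert_index i j, insert_index i l) * v $ insert_index i l)"
      using j H by (simp add: scalar_prod_def v'_def mat_delete_def insert_index_def)
    also have "\<dots> = (\<Sum>l\<in>{0..<n} - {i}. H $$ (insert_index i j, l) * v $ l)"
      by (rule sum_insert_index[OF i, of "\<lambda>l. H $$ (insert_index i j, l) * v $ l"])
    also have "\<dots> = (\<Sum>l\<in>{0..<n}. H $$ (insert_index i j, l) * v $ l)"
      using i vi by (subst (2) sum.remove[of _ i]) auto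
    also have "\<dots> = (H *\<^sub>v v) $ insert_index i j" using ij H v by (simp add: scalar_prod_def)
    also have "\<dots> = (lam \<cdot>\<^sub>v v') $ j" using ev ij j v by (simp add: v'_def)
    finally show "(mat_delete H i i *\<^sub>v v') $ j = (lam \<cdot>\<^sub>v v') $ j" .
  qed (use HD v'c in auto)
  ultimately have "eigenvalue (mat_delete H i i) lam"
    unfolding eigenvalue_def eigenvector_def using HD v'c H by auto
  thus ?thesis using eigenvalue_root_char_poly[OF HD] by simp
qed

lemma one_dim: assumes H: "H \<in> carrier_mat n n" and ord: "order lam (char_poly H) = 1"
  and u: "u \<in> carrier_vec n" "u \<noteq> 0\<^sub>v n" "H *\<^sub>v u = (lam::real) \<cdot>\<^sub>v u"
  and w: "w \<in> carrier_vec n" "H *\<^sub>v w = lam \<cdot>\<^sub>v w"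
  shows "\<exists>c. w = c \<cdot>\<^sub>v u"
proof (rule ccontr)
  assume nc: "\<not> (\<exists>c. w = c \<cdot>\<^sub>v u)"
  let ?p = "char_poly H"
  have lin: "H *\<^sub>v (w - c \<cdot>\<^sub>v u) = lam \<cdot>\<^sub>v (w - c \<cdot>\<^sub>v u)" for c
  proof -
    have "H *\<^sub>v (w - c \<cdot>\<^sub>v u) = H *\<^sub>v w - H *\<^sub>v (c \<cdot>\<^sub>v u)"
      using H u w by (simp add: mult_minus_distrib_mat_vec)
    also have "\<dots> = lam \<cdot>\<^sub>v w - c \<cdot>\<^sub>v (lam \<cdot>\<^sub>v u)" using H u w by (simp add: mult_mat_vec)
    also have "\<dots> = lam \<cdot>\<^sub>v (w - c \<cdot>\<^sub>v u)"
      by (rule eq_vecI) (use u w in \<open>auto simp: algebra_simps\<close>)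
    finally show ?thesis .
  qed
  have del0: "poly (char_poly (mat_delete H i i)) lam = 0" if i: "i < n" for i
  proof (cases "u $ i = 0")
    case True
    show ?thesis by (rule delete_eigen[OF H i u(1,2) True u(3)])
  next
    case False
    define c where "c = w $ i / u $ i"
    let ?v = "w - c \<cdot>\<^sub>v u"
    have vc: "?v \<in> carrier_vec n" using u w by simp
    have vi: "?v $ i = 0" using False i u w by (simp add: c_def)
    have "?v \<noteq> 0\<^sub>v n"
    proof
      assume z: "?v = 0\<^sub>v n"
      have "w = c \<cdot>\<^sub>v u"
      proof (rule eq_vecI)
        fix j assume "j < dim_vec (c \<cdot>\<^sub>v u)"
        hence j: "j < n" using u by simp
        from arg_cong[OF z, of "\<lambda>x. x $ j"] j u w show "w $ j = (c \<cdot>\<^sub>v u) $ j" by simp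
      qed (use u w in auto)
      with nc show False by blast
    qed
    from delete_eigen[OF H i vc this vi lin] show ?thesis .
  qed
  have n0: "n \<noteq> 0" using u by (metis eq_vecI carrier_vecD index_zero_vec(1,2) less_nat_zero_code)
  have deg: "degree ?p = n" using degree_monic_char_poly[OF H] by simp
  have p0: "?p \<noteq> 0" using degree_monic_char_poly[OF H] by auto
  have "poly (pderiv ?p) lam = (\<Sum>i<n. poly (char_poly (mat_delete H i i)) lam)"
    by (simp add: pderiv_char_poly[OF H] poly_sum)
  also have "\<dots> = 0" using del0 by simp
  finally have pd0: "poly (pderiv ?p) lam = 0" .
  have pdn: "pderiv ?p \<noteq> 0" using deg n0 by (simp add: pderiv_eq_0_iff)
  have "order lam (pderiv ?p) = 0" using order_pderiv2[OF pdn, of lam 0] ord by simp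
  with order_eq_0_iff[OF pdn] pd0 show False by simp
qed

lemma sing_iff: assumes H: "H \<in> carrier_mat n n"
  shows "(\<not> invertible_mat (H - (a::real) \<cdot>\<^sub>m 1\<^sub>m n)) \<longleftrightarrow> eigenvalue H a"
proof
  let ?M = "H - a \<cdot>\<^sub>m 1\<^sub>m n"
  have M: "?M \<in> carrier_mat n n" using H by simp
  have cm: "char_matrix H a = ?M" unfolding char_matrix_def
    by (rule eq_matI) (use H in auto)
  assume ni: "\<not> invertible_mat ?M"
  show "eigenvalue H a"
  proof (rule ccontr)
    assume "\<not> eigenvalue H a"
    hence "det ?M \<noteq> 0" using eigenvalue_det[OF H, of a] cm by simp
    from det_non_zero_imp_unit[OF M this, of undefined]
    obtain B where B: "B \<in> carrier_mat n n" "B * ?M = 1\<^sub>m n" "?M * B = 1\<^sub>m n"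
      unfolding Units_def by (auto simp: ring_mat_simps)
    have "invertible_mat ?M" unfolding invertible_mat_def inverts_mat_def square_mat.simps
      using B M by (intro conjI exI[of _ B]) auto
    with ni show False by simp
  qed
next
  let ?M = "H - a \<cdot>\<^sub>m 1\<^sub>m n"
  assume "eigenvalue H a"
  then obtain v where v: "v \<in> carrier_vec n" "v \<noteq> 0\<^sub>v n" "H *\<^sub>v v = a \<cdot>\<^sub>v v"
    unfolding eigenvalue_def eigenvector_def using H by auto
  have Mv: "?M *\<^sub>v v = 0\<^sub>v n"
  proof (rule eq_vecI)
    fix i assume "i < dim_vec (0\<^sub>v n :: real vec)"
    hence i: "i < n" by simp
    have "(?M *\<^sub>v v) $ i = (H *\<^sub>v v) $ i - (a \<cdot>\<^sub>v v) $ i"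
      using H v i by (subst minus_mult_distrib_mat_vec[of _ n n], auto)
    thus "(?M *\<^sub>v v) $ i = 0\<^sub>v n $ i" using v(3) i v by simp
  qed (use H in auto)
  show "\<not> invertible_mat ?M"
  proof
    assume "invertible_mat ?M"
    then obtain B where B: "B * ?M = 1\<^sub>m (dim_row B)" "?M * B = 1\<^sub>m (dim_row ?M)"
      unfolding invertible_mat_def inverts_mat_def by blast
    have Bc: "B \<in> carrier_mat n n"
      using B H by (metis carrier_matI index_mult_mat(2,3) index_one_mat(2,3) minus_carrier_mat
          HC_carrier carrier_matD(1,2))
    have "v = (B * ?M) *\<^sub>v v" using B(1) Bc v by simp
    also have "\<dots> = B *\<^sub>v (?M *\<^sub>v v)" using Bc H v by (intro assoc_mult_mat_vec[of _ n n]) auto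
    also have "\<dots> = 0\<^sub>v n" unfolding Mv
      by (rule eq_vecI) (use Bc in \<open>auto simp: scalar_prod_def\<close>)
    finally show False using v by simp
  qed
qed

lemma outer_mult: assumes y: "y \<in> carrier_vec n" and v: "v \<in> carrier_vec n"
  shows "(b \<cdot>\<^sub>m outer_mat y) *\<^sub>v v = (b * (y \<bullet> v)) \<cdot>\<^sub>v y"
proof (rule eq_vecI)
  fix i assume "i < dim_vec ((b * (y \<bullet> v)) \<cdot>\<^sub>v y)"
  hence i: "i < n" using y by simp
  show "((b \<cdot>\<^sub>m outer_mat y) *\<^sub>v v) $ i = ((b * (y \<bullet> v)) \<cdot>\<^sub>v y) $ i"
    using i y v by (simp add: outer_mat_def scalar_prod_def sum_distrib_left mult.commute mult.left_commute)
qed (use y v in \<open>auto simp: outer_mat_def\<close>)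

lemma mpl: "mat_prod_list n (map (\<lambda>i. H - lam i \<cdot>\<^sub>m 1\<^sub>m n) xs) = mprod H n (map lam xs)"
  by (induct xs) (auto simp: mat_prod_list_def)

lemma prod_list_pos: "(\<forall>x\<in>set xs. (x::real) > 0) \<Longrightarrow> prod_list xs > 0"
  by (induct xs) auto

lemma conv: assumes H: "H \<in> carrier_mat n n"
  and inj: "inj_on lam {1..k}"
  and sing: "\<forall>i\<in>{2..k}. \<not> invertible_mat (H - lam i \<cdot>\<^sub>m 1\<^sub>m n)"
  and b: "b > 0" and y: "y \<in> carrier_vec n" "y \<noteq> 0\<^sub>v n" "H *\<^sub>v y = lam 1 \<cdot>\<^sub>v y"
  and P: "mat_prod_list n (map (\<lambda>i. H - lam i \<cdot>\<^sub>m 1\<^sub>m n) [2..<k+1]) = b \<cdot>\<^sub>m outer_mat y"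
  and k: "1 \<le> k"
  shows "lam ` {1..k} = {x. eigenvalue H x}"
proof
  show "lam ` {1..k} \<subseteq> {x. eigenvalue H x}"
  proof
    fix x assume "x \<in> lam ` {1..k}"
    then obtain i where i: "i \<in> {1..k}" "x = lam i" by auto
    show "x \<in> {x. eigenvalue H x}"
    proof (cases "i = 1")
      case True
      thus ?thesis using i y H unfolding eigenvalue_def eigenvector_def by auto
    next
      case False
      with i have "i \<in> {2..k}" by auto
      with sing sing_iff[OF H] i show ?thesis by auto
    qed
  qed
  show "{x. eigenvalue H x} \<subseteq> lam ` {1..k}"
  proof
    fix mu assume "mu \<in> {x. eigenvalue H x}"
    then obtain v where v: "v \<in> carrier_vec n" "v \<noteq> 0\<^sub>v n" "H *\<^sub>v v = mu \<cdot>\<^sub>v v"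
      unfolding eigenvalue_def eigenvector_def using H by auto
    show "mu \<in> lam ` {1..k}"
    proof (rule ccontr)
      assume nin: "mu \<notin> lam ` {1..k}"
      define d where "d = (\<Prod>m\<leftarrow>map lam [2..<k+1]. mu - m)"
      have d: "d \<noteq> 0" unfolding d_def using nin by (auto simp: prod_list_zero_iff)
      have "d \<cdot>\<^sub>v v = mprod H n (map lam [2..<k+1]) *\<^sub>v v"
        unfolding d_def by (rule mprod_eigvec[OF H v(1) v(3), symmetric])
      also have "\<dots> = (b * (y \<bullet> v)) \<cdot>\<^sub>v y" unfolding mpl[symmetric] P
        by (rule outer_mult[OF y(1) v(1)])
      finally have dv: "d \<cdot>\<^sub>v v = (b * (y \<bullet> v)) \<cdot>\<^sub>v y" .
      define c where "c = b * (y \<bullet> v) / d"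
      have vc: "v = c \<cdot>\<^sub>v y"
      proof (rule eq_vecI)
        fix i assume "i < dim_vec (c \<cdot>\<^sub>v y)"
        hence i: "i < n" using y by simp
        from arg_cong[OF dv, of "\<lambda>w. w $ i"] i v y have "d * v $ i = b * (y \<bullet> v) * y $ i" by simp
        thus "v $ i = (c \<cdot>\<^sub>v y) $ i" using d i y unfolding c_def by (simp add: field_simps)
      qed (use v y in auto)
      have "mu \<cdot>\<^sub>v v = lam 1 \<cdot>\<^sub>v v"
      proof -
        have "mu \<cdot>\<^sub>v v = H *\<^sub>v v" using v by simp
        also have "\<dots> = c \<cdot>\<^sub>v (H *\<^sub>v y)" unfolding vc by (rule mult_mat_vec[OF H y(1)])
        also have "\<dots> = lam 1 \<cdot>\<^sub>v v" unfolding vc y(3) by (simp add: smult_smult_assoc mult.commute)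
        finally show ?thesis .
      qed
      moreover from v obtain l where l: "l < n" "v $ l \<noteq> 0" by (metis eq_vecI carrier_vecD index_zero_vec(1,2))
      ultimately have "(mu \<cdot>\<^sub>v v) $ l = (lam 1 \<cdot>\<^sub>v v) $ l" by simp
      hence "mu * v $ l = lam 1 * v $ l" using l v(1) by simp
      with l have "mu = lam 1" by simp
      with nin k show False by auto
    qed
  qed
qed

lemma fwd: assumes H: "H \<in> carrier_mat n n" and sym: "transpose_mat H = H"
  and ord: "Polynomial.order (largest_eigenvalue H) (char_poly H) = 1"
  and k: "2 \<le> k" and card: "card {x. eigenvalue H x} = k"
  shows "\<exists>lam :: nat \<Rightarrow> real. inj_on lam {1..k} \<and>
             (\<forall>i\<in>{2..k}. \<not> invertible_mat (H - lam i \<cdot>\<^sub>m 1\<^sub>m n)) \<and>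
             (\<exists>b y. b > 0 \<and> y \<in> carrier_vec n \<and> y \<noteq> 0\<^sub>v n \<and> H *\<^sub>v y = lam 1 \<cdot>\<^sub>v y \<and>
                mat_prod_list n (map (\<lambda>i. H - lam i \<cdot>\<^sub>m 1\<^sub>m n) [2..<k+1]) = b \<cdot>\<^sub>m outer_mat y)"
proof -
  define E where "E = {x. eigenvalue H x}"
  have fin: "finite E" using card k unfolding E_def by (metis card.infinite not_numeral_le_zero)
  have ne: "E \<noteq> {}" using card k unfolding E_def by (metis card.empty not_numeral_le_zero)
  define l1 where "l1 = Max E"
  have l1E: "l1 \<in> E" unfolding l1_def using fin ne by simp
  have l1max: "x \<le> l1" if "x \<in> E" for x unfolding l1_def using fin that by simp
  have ordl: "Polynomial.order l1 (char_poly H) = 1" using ord unfolding largest_eigenvalue_def l1_def E_def .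
  have cE': "card (E - {l1}) = card {2..k}" using card l1E fin unfolding E_def[symmetric] by simp
  obtain g where g: "bij_betw g {2..k} (E - {l1})"
    using finite_same_card_bij[of "{2..k}" "E - {l1}"] fin cE' by auto
  define lam where "lam i = (if i = 1 then l1 else g i)" for i :: nat
  have lamE: "lam i \<in> E - {l1}" if "i \<in> {2..k}" for i
    using that g unfolding lam_def bij_betw_def by auto
  have inj: "inj_on lam {1..k}"
  proof (rule inj_onI)
    fix i j assume i: "i \<in> {1..k}" and j: "j \<in> {1..k}" and e: "lam i = lam j"
    show "i = j"
    proof (cases "i = 1"; cases "j = 1")
      assume "i \<noteq> 1" "j \<noteq> 1"
      hence "i \<in> {2..k}" "j \<in> {2..k}" using i j by auto
      with e g show ?thesis unfolding lam_def bij_betw_def inj_on_def by auto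
    next
      assume "i = 1" "j \<noteq> 1"
      hence "j \<in> {2..k}" using j by auto
      from lamE[OF this] e \<open>i = 1\<close> show ?thesis by (auto simp: lam_def)
    next
      assume "i \<noteq> 1" "j = 1"
      hence "i \<in> {2..k}" using i by auto
      from lamE[OF this] e \<open>j = 1\<close> show ?thesis by (auto simp: lam_def)
    qed auto
  qed
  have sing: "\<forall>i\<in>{2..k}. \<not> invertible_mat (H - lam i \<cdot>\<^sub>m 1\<^sub>m n)"
    using lamE sing_iff[OF H] unfolding E_def by auto
  from l1E obtain y where y: "y \<in> carrier_vec n" "y \<noteq> 0\<^sub>v n" "H *\<^sub>v y = l1 \<cdot>\<^sub>v y"
    unfolding E_def eigenvalue_def eigenvector_def using H by auto
  define P where "P = mprod H n (map lam [2..<k+1])"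
  have Pc: "P \<in> carrier_mat n n" unfolding P_def using H by simp
  have set_ms: "set (map lam [2..<k+1]) = lam ` {2..k}" by auto
  have img: "lam ` {2..k} = E - {l1}"
  proof -
    have "lam ` {2..k} = g ` {2..k}" unfolding lam_def by (rule image_cong) auto
    thus ?thesis using g unfolding bij_betw_def by simp
  qed
  have zero: "(H - l1 \<cdot>\<^sub>m 1\<^sub>m n) * P = 0\<^sub>m n n"
  proof -
    have "mprod H n (l1 # map lam [2..<k+1]) = 0\<^sub>m n n"
    proof (rule F2[OF H sym])
      fix e assume "eigenvalue H e"
      hence "e \<in> E" unfolding E_def by simp
      thus "e \<in> set (l1 # map lam [2..<k+1])" using set_ms img by auto
    qed
    thus ?thesis unfolding P_def by simp
  qed
  have colev: "\<exists>a. col P j = a \<cdot>\<^sub>v y" if j: "j < n" for j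
  proof (rule one_dim[OF H ordl y])
    show "col P j \<in> carrier_vec n" using Pc by (intro carrier_vecI) simp
    have "(H - l1 \<cdot>\<^sub>m 1\<^sub>m n) *\<^sub>v col P j = col ((H - l1 \<cdot>\<^sub>m 1\<^sub>m n) * P) j"
      using col_mult2[of "H - l1 \<cdot>\<^sub>m 1\<^sub>m n" n n P n j] Pc H j by simp
    also have "\<dots> = 0\<^sub>v n" unfolding zero using j by (intro eq_vecI) auto
    finally have z: "(H - l1 \<cdot>\<^sub>m 1\<^sub>m n) *\<^sub>v col P j = 0\<^sub>v n" .
    show "H *\<^sub>v col P j = l1 \<cdot>\<^sub>v col P j"
    proof (rule eq_vecI)
      fix i assume "i < dim_vec (l1 \<cdot>\<^sub>v col P j)"
      hence i: "i < n" using Pc by simp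
      have "((H - l1 \<cdot>\<^sub>m 1\<^sub>m n) *\<^sub>v col P j) $ i = (H *\<^sub>v col P j) $ i - (l1 \<cdot>\<^sub>v col P j) $ i"
        using H Pc i by (subst minus_mult_distrib_mat_vec[of _ n n], auto)
      with z i show "(H *\<^sub>v col P j) $ i = (l1 \<cdot>\<^sub>v col P j) $ i" by simp
    qed (use H Pc in auto)
  qed
  obtain \<alpha> where \<alpha>: "\<And>j. j < n \<Longrightarrow> col P j = \<alpha> j \<cdot>\<^sub>v y" using colev by metis
  have Pij: "P $$ (i,j) = \<alpha> j * y $ i" if "i < n" "j < n" for i j
    using arg_cong[OF \<alpha>[OF that(2)], of "\<lambda>w. w $ i"] that Pc y by simp
  have Psym: "P $$ (i,j) = P $$ (j,i)" if "i < n" "j < n" for i j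
    using arg_cong[OF mprod_sym[OF H sym, of "map lam [2..<k+1]", folded P_def], of "\<lambda>M. M $$ (j,i)"] that Pc
    by simp
  from y obtain i0 where i0: "i0 < n" "y $ i0 \<noteq> 0" by (metis eq_vecI carrier_vecD index_zero_vec(1,2))
  define c where "c = \<alpha> i0 / y $ i0"
  have \<alpha>c: "\<alpha> j = c * y $ j" if j: "j < n" for j
  proof -
    have "\<alpha> j * y $ i0 = \<alpha> i0 * y $ j" using Pij[OF i0(1) j] Pij[OF j i0(1)] Psym[OF i0(1) j] by simp
    thus ?thesis using i0 unfolding c_def by (simp add: field_simps)
  qed
  have Pout: "P = c \<cdot>\<^sub>m outer_mat y"
    by (rule eq_matI) (use Pc y Pij \<alpha>c in \<open>auto simp: outer_mat_def\<close>)
  define d where "d = (\<Prod>m\<leftarrow>map lam [2..<k+1]. l1 - m)"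
  have dpos: "d > 0" unfolding d_def
  proof (rule prod_list_pos, intro ballI)
    fix x assume "x \<in> set (map (\<lambda>m. l1 - m) (map lam [2..<k+1]))"
    then obtain i where "i \<in> set [2..<k+1]" "x = l1 - lam i" by auto
    hence "i \<in> {2..k}" "x = l1 - lam i" by auto
    with lamE[of i] l1max[of "lam i"] show "x > 0" by force
  qed
  have "d \<cdot>\<^sub>v y = P *\<^sub>v y" unfolding d_def P_def by (rule mprod_eigvec[OF H y(1) y(3), symmetric])
  also have "\<dots> = (c * (y \<bullet> y)) \<cdot>\<^sub>v y" unfolding Pout by (rule outer_mult[OF y(1) y(1)])
  finally have "(d \<cdot>\<^sub>v y) $ i0 = ((c * (y \<bullet> y)) \<cdot>\<^sub>v y) $ i0" by simp
  hence dc: "d = c * (y \<bullet> y)" using i0 y by simp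
  have yy: "y \<bullet> y > 0"
  proof -
    have "y \<bullet> y = (\<Sum>i\<in>{0..<n}. y $ i * y $ i)" using y by (simp add: scalar_prod_def)
    also have "\<dots> \<ge> y $ i0 * y $ i0" using i0 by (intro member_le_sum) auto
    moreover have "y $ i0 * y $ i0 > 0" using i0(2)
      by (cases "y $ i0 > 0") (auto intro: mult_pos_pos mult_neg_neg)
    ultimately show ?thesis by linarith
  qed
  have cpos: "c > 0" using dc dpos yy by (metis zero_less_mult_pos2)
  show ?thesis
  proof (intro exI conjI)
    show "inj_on lam {1..k}" by (rule inj)
    show "\<forall>i\<in>{2..k}. \<not> invertible_mat (H - lam i \<cdot>\<^sub>m 1\<^sub>m n)" by (rule sing)
    show "c > 0" by (rule cpos)
    show "y \<in> carrier_vec n" "y \<noteq> 0\<^sub>v n" by (rule y(1), rule y(2))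
    show "H *\<^sub>v y = lam 1 \<cdot>\<^sub>v y" using y(3) by (simp add: lam_def)
    show "mat_prod_list n (map (\<lambda>i. H - lam i \<cdot>\<^sub>m 1\<^sub>m n) [2..<k+1]) = c \<cdot>\<^sub>m outer_mat y"
      unfolding mpl P_def[symmetric] by (rule Pout)
  qed
qed

theorem corollary2p7:
  fixes H :: "real mat" and n k :: nat
  assumes "H \<in> carrier_mat n n"
    and "transpose_mat H = H"
    and "order (largest_eigenvalue H) (char_poly H) = 1"
    and "2 \<le> k" and "k \<le> n"
  shows "(card {x. eigenvalue H x} = k \<longleftrightarrow>
          (\<exists>lam :: nat \<Rightarrow> real. inj_on lam {1..k} \<and>
             (\<forall>i\<in>{2..k}. \<not> invertible_mat (H - lam i \<cdot>\<^sub>m 1\<^sub>m n)) \<and>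
             (\<exists>b y. b > 0 \<and> y \<in> carrier_vec n \<and> y \<noteq> 0\<^sub>v n \<and> H *\<^sub>v y = lam 1 \<cdot>\<^sub>v y \<and>
                mat_prod_list n (map (\<lambda>i. H - lam i \<cdot>\<^sub>m 1\<^sub>m n) [2..<k+1]) = b \<cdot>\<^sub>m outer_mat y)))
       \<and> (\<forall>lam :: nat \<Rightarrow> real. (inj_on lam {1..k} \<and>
             (\<forall>i\<in>{2..k}. \<not> invertible_mat (H - lam i \<cdot>\<^sub>m 1\<^sub>m n)) \<and>
             (\<exists>b y. b > 0 \<and> y \<in> carrier_vec n \<and> y \<noteq> 0\<^sub>v n \<and> H *\<^sub>v y = lam 1 \<cdot>\<^sub>v y \<and>
                mat_prod_list n (map (\<lambda>i. H - lam i \<cdot>\<^sub>m 1\<^sub>m n) [2..<k+1]) = b \<cdot>\<^sub>m outer_mat y))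
           \<longrightarrow> lam ` {1..k} = {x. eigenvalue H x})"
proof -
  note H = assms(1) and sym = assms(2)
  have C: "lam ` {1..k} = {x. eigenvalue H x}"
    if "inj_on lam {1..k} \<and>
             (\<forall>i\<in>{2..k}. \<not> invertible_mat (H - lam i \<cdot>\<^sub>m 1\<^sub>m n)) \<and>
             (\<exists>b y. b > 0 \<and> y \<in> carrier_vec n \<and> y \<noteq> 0\<^sub>v n \<and> H *\<^sub>v y = lam 1 \<cdot>\<^sub>v y \<and>
                mat_prod_list n (map (\<lambda>i. H - lam i \<cdot>\<^sub>m 1\<^sub>m n) [2..<k+1]) = b \<cdot>\<^sub>m outer_mat y)"
    for lam :: "nat \<Rightarrow> real"
  proof -
    from that obtain b y where inj: "inj_on lam {1..k}"
      and sing: "\<forall>i\<in>{2..k}. \<not> invertible_mat (H - lam i \<cdot>\<^sub>m 1\<^sub>m n)"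
      and rest: "b > 0" "y \<in> carrier_vec n" "y \<noteq> 0\<^sub>v n" "H *\<^sub>v y = lam 1 \<cdot>\<^sub>v y"
       "mat_prod_list n (map (\<lambda>i. H - lam i \<cdot>\<^sub>m 1\<^sub>m n) [2..<k+1]) = b \<cdot>\<^sub>m outer_mat y"
      by blast
    show ?thesis by (rule conv[OF H inj sing rest]) (use assms(4) in auto)
  qed
  show ?thesis
  proof (intro conjI allI impI)
    show "card {x. eigenvalue H x} = k \<longleftrightarrow>
          (\<exists>lam :: nat \<Rightarrow> real. inj_on lam {1..k} \<and>
             (\<forall>i\<in>{2..k}. \<not> invertible_mat (H - lam i \<cdot>\<^sub>m 1\<^sub>m n)) \<and>
             (\<exists>b y. b > 0 \<and> y \<in> carrier_vec n \<and> y \<noteq> 0\<^sub>v n \<and> H *\<^sub>v y = lam 1 \<cdot>\<^sub>v y \<and>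
                mat_prod_list n (map (\<lambda>i. H - lam i \<cdot>\<^sub>m 1\<^sub>m n) [2..<k+1]) = b \<cdot>\<^sub>m outer_mat y))"
    proof
      assume "card {x. eigenvalue H x} = k"
      from fwd[OF H sym assms(3) assms(4) this] show "\<exists>lam :: nat \<Rightarrow> real. inj_on lam {1..k} \<and>
             (\<forall>i\<in>{2..k}. \<not> invertible_mat (H - lam i \<cdot>\<^sub>m 1\<^sub>m n)) \<and>
             (\<exists>b y. b > 0 \<and> y \<in> carrier_vec n \<and> y \<noteq> 0\<^sub>v n \<and> H *\<^sub>v y = lam 1 \<cdot>\<^sub>v y \<and>
                mat_prod_list n (map (\<lambda>i. H - lam i \<cdot>\<^sub>m 1\<^sub>m n) [2..<k+1]) = b \<cdot>\<^sub>m outer_mat y)" .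
    next
      assume "\<exists>lam :: nat \<Rightarrow> real. inj_on lam {1..k} \<and>
             (\<forall>i\<in>{2..k}. \<not> invertible_mat (H - lam i \<cdot>\<^sub>m 1\<^sub>m n)) \<and>
             (\<exists>b y. b > 0 \<and> y \<in> carrier_vec n \<and> y \<noteq> 0\<^sub>v n \<and> H *\<^sub>v y = lam 1 \<cdot>\<^sub>v y \<and>
                mat_prod_list n (map (\<lambda>i. H - lam i \<cdot>\<^sub>m 1\<^sub>m n) [2..<k+1]) = b \<cdot>\<^sub>m outer_mat y)"
      then obtain lam :: "nat \<Rightarrow> real" where l: "inj_on lam {1..k} \<and>
             (\<forall>i\<in>{2..k}. \<not> invertible_mat (H - lam i \<cdot>\<^sub>m 1\<^sub>m n)) \<and>
             (\<exists>b y. b > 0 \<and> y \<in> carrier_vec n \<and> y \<noteq> 0\<^sub>v n \<and> H *\<^sub>v y = lam 1 \<cdot>\<^sub>v y \<and>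
                mat_prod_list n (map (\<lambda>i. H - lam i \<cdot>\<^sub>m 1\<^sub>m n) [2..<k+1]) = b \<cdot>\<^sub>m outer_mat y)"
        by blast
      have "card {x. eigenvalue H x} = card (lam ` {1..k})" using C[OF l] by simp
      also have "\<dots> = k" using l card_image[of lam "{1..k}"] by simp
      finally show "card {x. eigenvalue H x} = k" .
    qed
  qed (rule C)
qed

end
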